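(* Consider $n$ users forming a clique with uniform weights, i.e., $\phi(x_i;x_{-i})=\frac1n\sum_{j=1}^n x_j$ for every $i$. Then for any dimension $\ell$, any features $x_1,\dots,x_n\in\mathbb{R}^\ell$, and any linear classifier $h(x_i;x_{-i})=\mathrm{sign}(\theta^\top\phi(x_i;x_{-i})+b)$, under the myopic best-response dynamics described below either (i) all $n$ users move in the first round, or (ii) none of the users move at all.
   Context: $\mathrm{sign}(0)=+1$. Cost $c(x,x')=\|x-x'\|_2$. Dynamics: $x_i^{(0)}=x_i$; at each round $t\ge1$ all users update concurrently; user $i$ changes her features only if she is currently classified $-1$ and some $x'$ with $h(x';x^{(t-1)}_{-i})=+1$ has $c(x_i^{(t-1)},x')\le2$, in which case she moves to the minimum-cost such point (embedding exactly on the boundary $\theta^\top\phi+b=0$); otherwise she stays. User $i$ "moves at round $t$" if $x_i^{(t)}\neq x_i^{(t-1)}$. *)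

theory Defs
  imports "HOL-Analysis.Analysis"
begin

text \<open>Sign convention: sign(0) = +1.\<close>
definition sgn0 :: "real \<Rightarrow> int" where
  "sgn0 r = (if r \<ge> 0 then 1 else -1)"

definition clique_phi :: "nat \<Rightarrow> (nat \<Rightarrow> 'a::real_vector) \<Rightarrow> nat \<Rightarrow> 'a" where
  "clique_phi n x i = (1 / real n) *\<^sub>R (\<Sum>j<n. x j)"

definition classify ::
  "'a::real_inner \<Rightarrow> real \<Rightarrow> ((nat \<Rightarrow> 'a) \<Rightarrow> nat \<Rightarrow> 'a) \<Rightarrow> (nat \<Rightarrow> 'a) \<Rightarrow> nat \<Rightarrow> int" where
  "classify theta b phi x i = sgn0 (theta \<bullet> phi x i + b)"

definition feasible_dev ::
  "'a::real_inner \<Rightarrow> real \<Rightarrow> ((nat \<Rightarrow> 'a) \<Rightarrow> nat \<Rightarrow> 'a) \<Rightarrow> (nat \<Rightarrow> 'a) \<Rightarrow> nat \<Rightarrow> 'a \<Rightarrow> bool" where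
  "feasible_dev theta b phi x i x' \<longleftrightarrow>
     classify theta b phi (x(i := x')) i = 1 \<and> norm (x i - x') \<le> 2"

definition best_response ::
  "'a::real_inner \<Rightarrow> real \<Rightarrow> ((nat \<Rightarrow> 'a) \<Rightarrow> nat \<Rightarrow> 'a) \<Rightarrow> (nat \<Rightarrow> 'a) \<Rightarrow> nat \<Rightarrow> 'a" where
  "best_response theta b phi x i =
     (if classify theta b phi x i = -1 \<and> (\<exists>x'. feasible_dev theta b phi x i x')
      then (SOME x'. feasible_dev theta b phi x i x' \<and>
                     (\<forall>y. feasible_dev theta b phi x i y \<longrightarrow> norm (x i - x') \<le> norm (x i - y)))
      else x i)"

primrec dynamics ::
  "'a::real_inner \<Rightarrow> real \<Rightarrow> ((nat \<Rightarrow> 'a) \<Rightarrow> nat \<Rightarrow> 'a) \<Rightarrow> (nat \<Rightarrow> 'a) \<Rightarrow> nat \<Rightarrow> nat \<Rightarrow> 'a" where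
  "dynamics theta b phi x0 0 = x0"
| "dynamics theta b phi x0 (Suc t) = (\<lambda>i. best_response theta b phi (dynamics theta b phi x0 t) i)"

end

theory Submission
  imports Defs
begin

lemma phi_indep: "clique_phi n x i = clique_phi n x k"
  by (simp add: clique_phi_def)

lemma phi_upd_lt:
  assumes "i < n"
  shows "clique_phi n (x(i:=y)) i = clique_phi n x k + (1 / real n) *\<^sub>R (y - x i)"
proof -
  have "(\<Sum>j<n. (x(i:=y)) j) = y + (\<Sum>j\<in>{..<n}-{i}. x j)"
    using sum.remove[of "{..<n}" i "x(i:=y)"] assms by simp
  moreover have "(\<Sum>j<n. x j) = x i + (\<Sum>j\<in>{..<n}-{i}. x j)"
    using sum.remove[of "{..<n}" i x] assms by simp
  ultimately have "(\<Sum>j<n. (x(i:=y)) j) = (\<Sum>j<n. x j) + (y - x i)"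
    by (simp add: algebra_simps)
  then show ?thesis by (simp add: clique_phi_def scaleR_add_right)
qed

lemma phi_upd_ge:
  assumes "\<not> i < n"
  shows "clique_phi n (x(i:=y)) i = clique_phi n x k"
proof -
  have "(\<Sum>j<n. (x(i:=y)) j) = (\<Sum>j<n. x j)"
    using assms by (intro sum.cong) auto
  then show ?thesis by (simp add: clique_phi_def)
qed

lemma fixed_forever:
  assumes "\<And>i. best_response theta b phi x i = x i"
  shows "dynamics theta b phi x t = x"
proof (induction t)
  case 0 then show ?case by simp
next
  case (Suc t)
  have "dynamics theta b phi x (Suc t) = (\<lambda>i. best_response theta b phi (dynamics theta b phi x t) i)"
    by (rule dynamics.simps(2))
  also have "\<dots> = (\<lambda>i. best_response theta b phi x i)" unfolding Suc.IH ..
  also have "\<dots> = x" by (rule ext) (rule assms)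
  finally show ?case .
qed

theorem proposition6:
  fixes theta :: "real ^ 'l" and b :: real and x :: "nat \<Rightarrow> real ^ 'l" and n :: nat
  shows "(\<forall>i<n. dynamics theta b (clique_phi n) x 1 i \<noteq> dynamics theta b (clique_phi n) x 0 i)
       \<or> (\<forall>t. \<forall>i<n. dynamics theta b (clique_phi n) x (Suc t) i = dynamics theta b (clique_phi n) x t i)"
proof -
  let ?phi = "clique_phi n"
  define S where "S = theta \<bullet> ?phi x 0 + b"
  have clsS: "classify theta b ?phi x i = sgn0 S" for i
    unfolding classify_def S_def using phi_indep[of n x i 0] by simp
  have fix2: "\<forall>t. \<forall>i<n. dynamics theta b ?phi x (Suc t) i = dynamics theta b ?phi x t i"
    if "\<And>i. best_response theta b ?phi x i = x i"
    using fixed_forever[of theta b ?phi x, OF that] by (simp add: that)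
  show ?thesis
  proof (cases "S \<ge> 0")
    case True
    then have "classify theta b ?phi x i = 1" for i using clsS by (simp add: sgn0_def)
    then have "best_response theta b ?phi x i = x i" for i
      by (simp add: best_response_def)
    then show ?thesis by (intro disjI2 fix2)
  next
    case False
    then have cm: "classify theta b ?phi x i = -1" for i using clsS by (simp add: sgn0_def)
    have nf_self: "\<not> feasible_dev theta b ?phi x i (x i)" for i
      using cm by (simp add: feasible_dev_def)
    have feas_iff: "feasible_dev theta b ?phi x i y \<longleftrightarrow>
        sgn0 (theta \<bullet> (?phi x 0 + (1 / real n) *\<^sub>R (y - x i)) + b) = 1 \<and> norm (x i - y) \<le> 2"
      if "i < n" for i y
      unfolding feasible_dev_def classify_def using phi_upd_lt[OF that, of x y 0] by simp
    show ?thesis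
    proof (cases "\<exists>i<n. \<exists>y. feasible_dev theta b ?phi x i y")
      case True
      then obtain i y where i: "i < n" and fy: "feasible_dev theta b ?phi x i y" by metis
      have allf: "feasible_dev theta b ?phi x j (y - x i + x j)" if j: "j < n" for j
        using fy feas_iff[OF i, of y] feas_iff[OF j, of "y - x i + x j"]
        by (simp add: algebra_simps)
      have "dynamics theta b ?phi x 1 j \<noteq> dynamics theta b ?phi x 0 j" if j: "j < n" for j
      proof -
        let ?F = "{z. feasible_dev theta b ?phi x j z}"
        have Feq: "?F = {z. 0 \<le> theta \<bullet> (?phi x 0 + (1 / real n) *\<^sub>R (z - x j)) + b}
                        \<inter> cball (x j) 2"
        proof -
          have "feasible_dev theta b ?phi x j z \<longleftrightarrow> 0 \<le> theta \<bullet> (?phi x 0 + (1 / real n) *\<^sub>R (z - x j)) + b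
                  \<and> z \<in> cball (x j) 2" for z
            unfolding feas_iff[OF j] by (simp add: sgn0_def dist_norm)
          then show ?thesis by blast
        qed
        have "closed {z. 0 \<le> theta \<bullet> (?phi x 0 + (1 / real n) *\<^sub>R (z - x j)) + b}"
          by (intro closed_Collect_le continuous_intros)
        then have clF: "closed ?F" unfolding Feq using closed_cball by (rule closed_Int)
        have neF: "?F \<noteq> {}" using allf[OF j] by (metis empty_iff mem_Collect_eq)
        obtain m where m1: "m \<in> ?F" and m2: "\<And>z. z \<in> ?F \<Longrightarrow> dist (x j) m \<le> dist (x j) z"
          using distance_attains_inf[OF clF neF, of "x j"] by blast
        have ex: "\<exists>z. feasible_dev theta b ?phi x j z \<and>
              (\<forall>w. feasible_dev theta b ?phi x j w \<longrightarrow> norm (x j - z) \<le> norm (x j - w))"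
        proof (intro exI[of _ m] conjI allI impI)
          show "feasible_dev theta b ?phi x j m" using m1 by simp
          fix w assume "feasible_dev theta b ?phi x j w"
          then have "dist (x j) m \<le> dist (x j) w" by (intro m2) simp
          then show "norm (x j - m) \<le> norm (x j - w)" by (simp add: dist_norm)
        qed
        have br: "best_response theta b ?phi x j = (SOME z. feasible_dev theta b ?phi x j z \<and>
              (\<forall>w. feasible_dev theta b ?phi x j w \<longrightarrow> norm (x j - z) \<le> norm (x j - w)))"
          unfolding best_response_def
          by (rule if_P) (rule conjI[OF cm[of j] exI[where P="feasible_dev theta b ?phi x j", OF allf[OF j]]])
        have "feasible_dev theta b ?phi x j (best_response theta b ?phi x j)"
          unfolding br by (rule conjunct1[OF someI_ex[OF ex]])
        then have "best_response theta b ?phi x j \<noteq> x j" using nf_self[of j] by (intro notI) simp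
        then show ?thesis by simp
      qed
      then show ?thesis by simp
    next
      case False
      have "\<not> feasible_dev theta b ?phi x i y" for i y
      proof (cases "i < n")
        case True then show ?thesis using False by simp
      next
        case ge: False
        show ?thesis using cm[of i] phi_upd_ge[OF ge, of x y i]
          by (simp add: feasible_dev_def classify_def)
      qed
      then have "best_response theta b ?phi x i = x i" for i
        by (simp add: best_response_def)
      then show ?thesis by (intro disjI2 fix2)
    qed
  qed
qed

end
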